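(* Let $n\ge2$ and $1\le p\le n-1$. A permutation $\pi\in S_n$ is a $p$-resultant permutation if and only if $\{\pi_1,\dots,\pi_{n-p}\}=\{1,\dots,n-p\}$, i.e. $(\pi_1,\dots,\pi_{n-p})\in S_{n-p}$.
   Context: For $m\ge1$, $1\le p\le m$: sites are $0,\dots,m+1$; a configuration in $\mathcal{S}(m,p)$ places $m+1$ distinct chips labeled $1,\dots,m+1$ with sites $0,m+1$ empty, one chip at each site of $\{1,\dots,m\}\setminus\{p\}$ and two chips at site $p$. Toppling: while some site holds at least two chips, choose such a site $i$ and two chips $\alpha<\beta$ there and move $\alpha$ to $i-1$, $\beta$ to $i+1$. It is known this terminates with at most one chip per site within sites $0,\dots,m+1$ and the final configuration is independent of the choices; reading chip labels left to right gives a permutation in $S_{m+1}$, to which the configuration is said to topple. A permutation $\pi\in S_n$ is $p$-resultant if some configuration in $\mathcal{S}(n-1,p)$ topples to $\pi$. *)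

theory Defs
  imports Main
begin

text \<open>A chip configuration with chips labelled 1..m+1 is a function assigning
  to each chip label its site (an integer). Only the values on labels 1..m+1 matter.\<close>

type_synonym config = "nat \<Rightarrow> int"

definition chips :: "nat \<Rightarrow> nat set" where
  "chips m = {1..m+1}"

definition init_configs :: "nat \<Rightarrow> nat \<Rightarrow> config set" where
  "init_configs m p = {c. (\<forall>a\<in>chips m. 1 \<le> c a \<and> c a \<le> int m) \<and>
      (\<forall>s\<in>{1..int m}. card {a\<in>chips m. c a = s} = (if s = int p then 2 else 1))}"

definition topple_step :: "nat \<Rightarrow> config \<Rightarrow> config \<Rightarrow> bool" where
  "topple_step m c c' \<longleftrightarrow> (\<exists>\<alpha>\<in>chips m. \<exists>\<beta>\<in>chips m. \<alpha> < \<beta> \<and> c \<alpha> = c \<beta> \<and>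
       c' = c(\<alpha> := c \<alpha> - 1, \<beta> := c \<beta> + 1))"

definition stable :: "nat \<Rightarrow> config \<Rightarrow> bool" where
  "stable m c \<longleftrightarrow> inj_on c (chips m)"

definition reading :: "nat \<Rightarrow> config \<Rightarrow> nat list" where
  "reading m c = sort_key c [1..<m+2]"

definition topples_to :: "nat \<Rightarrow> config \<Rightarrow> nat list \<Rightarrow> bool" where
  "topples_to m c \<pi> \<longleftrightarrow> (\<exists>c'. (topple_step m)\<^sup>*\<^sup>* c c' \<and> stable m c' \<and> reading m c' = \<pi>)"

text \<open>Permutations of S_n as lists (one-line notation).\<close>
definition is_perm :: "nat \<Rightarrow> nat list \<Rightarrow> bool" where
  "is_perm n \<pi> \<longleftrightarrow> distinct \<pi> \<and> set \<pi> = {1..n}"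

definition p_resultant :: "nat \<Rightarrow> nat \<Rightarrow> nat list \<Rightarrow> bool" where
  "p_resultant n p \<pi> \<longleftrightarrow> (\<exists>c\<in>init_configs (n-1) p. topples_to (n-1) c \<pi>)"

end

theory Submission
  imports Defs
begin


definition occ :: "nat \<Rightarrow> config \<Rightarrow> int \<Rightarrow> nat" where
  "occ m c s = card {a\<in>chips m. c a = s}"
definition Lc :: "nat \<Rightarrow> config \<Rightarrow> int \<Rightarrow> nat" where
  "Lc m c s = card {a\<in>chips m. c a \<le> s}"

lemma finite_chips[simp]: "finite (chips m)" by (simp add: chips_def)
lemma card_chips[simp]: "card (chips m) = m+1" by (simp add: chips_def)

lemma topple_stepE:
  assumes "topple_step m c c'"
  obtains \<alpha> \<beta> where "\<alpha> \<in> chips m" "\<beta> \<in> chips m" "\<alpha> < \<beta>" "c \<alpha> = c \<beta>"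
    "c' = c(\<alpha> := c \<alpha> - 1, \<beta> := c \<beta> + 1)"
  using assms unfolding topple_step_def by blast

lemma occ_upd:
  assumes "\<alpha> \<in> chips m" "\<beta> \<in> chips m" "\<alpha> \<noteq> \<beta>" "c \<alpha> = v" "c \<beta> = v"
  shows "int (occ m (c(\<alpha> := v-1, \<beta> := v+1)) s) = int (occ m c s) - (if s = v then 2 else 0)
     + (if s = v-1 then 1 else 0) + (if s = v+1 then 1 else 0)"
proof -
  let ?c' = "c(\<alpha> := v-1, \<beta> := v+1)"
  let ?A = "{a\<in>chips m. c a = s}" and ?B = "{a\<in>chips m. ?c' a = s}"
  have fin: "finite ?A" by simp
  consider "s = v" | "s = v-1" | "s = v+1" | "s \<noteq> v \<and> s \<noteq> v-1 \<and> s \<noteq> v+1" by blast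
  then show ?thesis
  proof cases
    case 1
    then have B: "?B = ?A - {\<alpha>,\<beta>}" using assms by auto
    have sub: "{\<alpha>,\<beta>} \<subseteq> ?A" using assms 1 by auto
    have "card ?B = card ?A - 2" unfolding B using assms card_Diff_subset[OF _ sub] by auto
    moreover have "card ?A \<ge> 2" using card_mono[OF fin sub] assms by auto
    ultimately show ?thesis using 1 by (simp add: occ_def)
  next
    case 2
    then have "?B = insert \<alpha> ?A" "\<alpha> \<notin> ?A" using assms by auto
    then show ?thesis using 2 by (simp add: occ_def)
  next
    case 3
    then have "?B = insert \<beta> ?A" "\<beta> \<notin> ?A" using assms by auto
    then show ?thesis using 3 by (simp add: occ_def)
  next
    case 4
    then have "?B = ?A" using assms by auto
    then show ?thesis using 4 by (simp add: occ_def)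
  qed
qed

lemma Lc_upd:
  assumes "\<alpha> \<in> chips m" "\<beta> \<in> chips m" "\<alpha> \<noteq> \<beta>" "c \<alpha> = v" "c \<beta> = v"
  shows "int (Lc m (c(\<alpha> := v-1, \<beta> := v+1)) s) = int (Lc m c s)
     + (if s = v-1 then 1 else 0) - (if s = v then 1 else 0)"
proof -
  let ?c' = "c(\<alpha> := v-1, \<beta> := v+1)"
  let ?A = "{a\<in>chips m. c a \<le> s}" and ?B = "{a\<in>chips m. ?c' a \<le> s}"
  have fin: "finite ?A" by simp
  consider "s < v-1" | "s = v-1" | "s = v" | "s > v" by linarith
  then show ?thesis
  proof cases
    case 1
    then have "?B = ?A" using assms by auto
    then show ?thesis using 1 by (simp add: Lc_def)
  next
    case 2
    then have "?B = insert \<alpha> ?A" "\<alpha> \<notin> ?A" using assms by auto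
    then show ?thesis using 2 by (simp add: Lc_def)
  next
    case 3
    then have B: "?B = ?A - {\<beta>}" "\<beta> \<in> ?A" using assms by auto
    have "card ?B = card ?A - 1" unfolding B(1) using B(2) by (rule card_Diff_singleton)
    moreover have "?A \<noteq> {}" using B(2) by blast
    then have "card ?A \<ge> 1" using fin by (simp add: Suc_le_eq card_gt_0_iff)
    ultimately show ?thesis using 3 by (simp add: Lc_def)
  next
    case 4
    then have "?B = ?A" using assms by auto
    then show ?thesis using 4 by (simp add: Lc_def)
  qed
qed

lemma Lc_split: "Lc m c s = Lc m c (s-1) + occ m c s"
proof -
  have "{a\<in>chips m. c a \<le> s} = {a\<in>chips m. c a \<le> s-1} \<union> {a\<in>chips m. c a = s}" by auto
  moreover have "{a\<in>chips m. c a \<le> s-1} \<inter> {a\<in>chips m. c a = s} = {}" by auto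
  ultimately show ?thesis unfolding Lc_def occ_def
    by (simp add: card_Un_disjoint)
qed

lemma Lc_le: "Lc m c s \<le> m+1"
  unfolding Lc_def using card_mono[of "chips m" "{a\<in>chips m. c a \<le> s}"] by auto

lemma Lc_mono: "s \<le> t \<Longrightarrow> Lc m c s \<le> Lc m c t"
  unfolding Lc_def by (rule card_mono) auto

definition Inv :: "nat \<Rightarrow> config \<Rightarrow> bool" where
  "Inv m c \<longleftrightarrow> (\<forall>s. -1 \<le> s \<and> s \<le> int m + 1 \<longrightarrow> s \<le> int (Lc m c s) \<and> int (Lc m c s) \<le> s + 1)"

lemma occ_ge2:
  assumes "\<alpha> \<in> chips m" "\<beta> \<in> chips m" "\<alpha> \<noteq> \<beta>" "c \<alpha> = v" "c \<beta> = v"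
  shows "occ m c v \<ge> 2"
proof -
  have sub: "{\<alpha>,\<beta>} \<subseteq> {a\<in>chips m. c a = v}" using assms by auto
  show ?thesis using card_mono[OF _ sub] assms unfolding occ_def by auto
qed

lemma Inv_fire:
  assumes I: "Inv m c" and "\<alpha> \<in> chips m" "\<beta> \<in> chips m" "\<alpha> \<noteq> \<beta>" "c \<alpha> = v" "c \<beta> = v"
  shows "1 \<le> v \<and> v \<le> int m \<and> int (Lc m c (v-1)) = v - 1 \<and> int (Lc m c v) = v + 1
     \<and> occ m c v = 2"
proof -
  have o2: "occ m c v \<ge> 2" using occ_ge2 assms by blast
  have sp: "Lc m c v = Lc m c (v-1) + occ m c v" by (rule Lc_split)
  have i0: "Lc m c 0 \<le> 1" using I[unfolded Inv_def, THEN spec[of _ 0]] by simp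
  have v1: "1 \<le> v"
  proof (rule ccontr)
    assume "\<not> 1 \<le> v"
    then have "Lc m c v \<le> Lc m c 0" by (intro Lc_mono) auto
    then show False using sp o2 i0 by linarith
  qed
  have im: "int m \<le> int (Lc m c (int m))" using I[unfolded Inv_def, THEN spec[of _ "int m"]] by simp
  have vm: "v \<le> int m"
  proof (rule ccontr)
    assume "\<not> v \<le> int m"
    then have "Lc m c (int m) \<le> Lc m c (v-1)" by (intro Lc_mono) auto
    then show False using sp o2 im Lc_le[of m c v] by linarith
  qed
  have a: "v - 1 \<le> int (Lc m c (v-1))"
    using I[unfolded Inv_def, THEN spec[of _ "v-1"]] v1 vm by linarith
  have b: "int (Lc m c v) \<le> v + 1"
    using I[unfolded Inv_def, THEN spec[of _ "v"]] v1 vm by linarith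
  show ?thesis using a b sp o2 v1 vm by linarith
qed

lemma Inv_step:
  assumes I: "Inv m c" and st: "topple_step m c c'"
  shows "Inv m c'"
proof -
  obtain \<alpha> \<beta> where ab: "\<alpha> \<in> chips m" "\<beta> \<in> chips m" "\<alpha> < \<beta>" "c \<alpha> = c \<beta>"
    "c' = c(\<alpha> := c \<alpha> - 1, \<beta> := c \<beta> + 1)" using st by (rule topple_stepE)
  define v where "v = c \<alpha>"
  have c': "c' = c(\<alpha> := v - 1, \<beta> := v + 1)" using ab v_def by simp
  have vb: "c \<beta> = v" using ab v_def by simp
  have F: "1 \<le> v \<and> v \<le> int m \<and> int (Lc m c (v-1)) = v - 1 \<and> int (Lc m c v) = v + 1"
    using Inv_fire[OF I ab(1,2) _ v_def[symmetric] vb] ab by auto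
  show ?thesis unfolding Inv_def
  proof (intro allI impI)
    fix s assume s: "-1 \<le> s \<and> s \<le> int m + 1"
    have U: "int (Lc m c' s) = int (Lc m c s) + (if s = v-1 then 1 else 0) - (if s = v then 1 else 0)"
      unfolding c' by (rule Lc_upd) (use ab v_def in auto)
    have "s \<le> int (Lc m c s) \<and> int (Lc m c s) \<le> s + 1" using I s unfolding Inv_def by auto
    then show "s \<le> int (Lc m c' s) \<and> int (Lc m c' s) \<le> s + 1" using U F by auto
  qed
qed

lemma Inv_steps: "(topple_step m)\<^sup>*\<^sup>* c c' \<Longrightarrow> Inv m c \<Longrightarrow> Inv m c'"
  by (induction rule: rtranclp_induct) (auto intro: Inv_step)

lemma occ_two_eq:
  assumes "occ m c v = 2" "x \<in> chips m" "y \<in> chips m" "x \<noteq> y" "c x = v" "c y = v"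
  shows "{a\<in>chips m. c a = v} = {x,y}"
proof -
  have sub: "{x,y} \<subseteq> {a\<in>chips m. c a = v}" using assms by auto
  have "card {x,y} = card {a\<in>chips m. c a = v}" using assms unfolding occ_def by auto
  then show ?thesis using card_subset_eq[OF _ sub] by auto
qed

lemma topple_stepE2:
  assumes "topple_step m c c'"
  obtains \<alpha> \<beta> v where "\<alpha> \<in> chips m" "\<beta> \<in> chips m" "\<alpha> < \<beta>" "c \<alpha> = v" "c \<beta> = v"
    "c' = c(\<alpha> := v - 1, \<beta> := v + 1)"
  using assms unfolding topple_step_def by force

lemma diamond:
  assumes I: "Inv m c" and s1: "topple_step m c c1" and s2: "topple_step m c c2" and ne: "c1 \<noteq> c2"
  shows "\<exists>d. topple_step m c1 d \<and> topple_step m c2 d"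
proof -
  obtain \<alpha>1 \<beta>1 v where a1: "\<alpha>1 \<in> chips m" "\<beta>1 \<in> chips m" "\<alpha>1 < \<beta>1" "c \<alpha>1 = v" "c \<beta>1 = v"
    "c1 = c(\<alpha>1 := v - 1, \<beta>1 := v + 1)" using s1 by (rule topple_stepE2)
  obtain \<alpha>2 \<beta>2 w where a2: "\<alpha>2 \<in> chips m" "\<beta>2 \<in> chips m" "\<alpha>2 < \<beta>2" "c \<alpha>2 = w" "c \<beta>2 = w"
    "c2 = c(\<alpha>2 := w - 1, \<beta>2 := w + 1)" using s2 by (rule topple_stepE2)
  have ne1: "\<alpha>1 \<noteq> \<beta>1" "\<alpha>2 \<noteq> \<beta>2" using a1(3) a2(3) by auto
  have F1: "1 \<le> v \<and> v \<le> int m \<and> int (Lc m c (v-1)) = v - 1 \<and> int (Lc m c v) = v + 1 \<and> occ m c v = 2"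
    by (rule Inv_fire[OF I a1(1,2) ne1(1) a1(4,5)])
  have F2: "1 \<le> w \<and> w \<le> int m \<and> int (Lc m c (w-1)) = w - 1 \<and> int (Lc m c w) = w + 1 \<and> occ m c w = 2"
    by (rule Inv_fire[OF I a2(1,2) ne1(2) a2(4,5)])
  have vw: "v \<noteq> w"
  proof
    assume vw: "v = w"
    have o: "occ m c v = 2" using F1 by simp
    have "{a\<in>chips m. c a = v} = {\<alpha>1,\<beta>1}" by (rule occ_two_eq[OF o a1(1,2) ne1(1) a1(4,5)])
    moreover have "{a\<in>chips m. c a = v} = {\<alpha>2,\<beta>2}" using vw occ_two_eq[OF o a2(1,2) ne1(2)] a2(4,5) by simp
    ultimately have "{\<alpha>1,\<beta>1} = {\<alpha>2,\<beta>2}" by simp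
    then have "\<alpha>1 = \<alpha>2 \<and> \<beta>1 = \<beta>2" using a1(3) a2(3)
      unfolding doubleton_eq_iff by auto
    then show False using ne a1(6) a2(6) vw by simp
  qed
  have nadj: "w \<noteq> v + 1 \<and> v \<noteq> w + 1" using F1 F2 by auto
  have d: "\<alpha>1 \<noteq> \<alpha>2" "\<alpha>1 \<noteq> \<beta>2" "\<beta>1 \<noteq> \<alpha>2" "\<beta>1 \<noteq> \<beta>2"
    using vw a1(4,5) a2(4,5) by auto
  define d0 where "d0 = c(\<alpha>1 := v - 1, \<beta>1 := v + 1, \<alpha>2 := w - 1, \<beta>2 := w + 1)"
  have c1a: "c1 \<alpha>2 = w" "c1 \<beta>2 = w" using a1(6) a2(4,5) d by auto
  have c2a: "c2 \<alpha>1 = v" "c2 \<beta>1 = v" using a2(6) a1(4,5) d by auto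
  have e1: "d0 = c1(\<alpha>2 := w - 1, \<beta>2 := w + 1)"
    unfolding d0_def a1(6) by simp
  have e2: "d0 = c2(\<alpha>1 := v - 1, \<beta>1 := v + 1)"
    unfolding a2(6) d0_def using d by (intro ext) simp
  have "topple_step m c1 d0"
    unfolding topple_step_def using a2(1,2,3) c1a e1 by metis
  moreover have "topple_step m c2 d0"
    unfolding topple_step_def using a1(1,2,3) c2a e2 by metis
  ultimately show ?thesis by blast
qed

lemma strip:
  assumes "(topple_step m)\<^sup>*\<^sup>* c e" "Inv m c" "topple_step m c b"
  shows "\<exists>d. (topple_step m)\<^sup>*\<^sup>* b d \<and> (e = d \<or> topple_step m e d)"
  using assms(1)
proof (induction rule: rtranclp_induct)
  case base
  then show ?case using assms by blast
next
  case (step e' e)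
  then obtain d' where d': "(topple_step m)\<^sup>*\<^sup>* b d'" "e' = d' \<or> topple_step m e' d'" by blast
  have Ie: "Inv m e'" using Inv_steps step(1) assms(2) by blast
  show ?case
  proof (cases "e' = d'")
    case True
    then show ?thesis using d' step(2) by (metis rtranclp.rtrancl_into_rtrancl)
  next
    case False
    then have sd: "topple_step m e' d'" using d' by auto
    show ?thesis
    proof (cases "d' = e")
      case True then show ?thesis using d' by blast
    next
      case False
      then obtain d'' where "topple_step m d' d''" "topple_step m e d''"
        using diamond[OF Ie sd step(2)] by metis
      then show ?thesis using d' by (metis rtranclp.rtrancl_into_rtrancl)
    qed
  qed
qed

lemma NF_unique:
  assumes "(topple_step m)\<^sup>*\<^sup>* c b" "Inv m c" "(topple_step m)\<^sup>*\<^sup>* c e"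
    "\<And>x. \<not> topple_step m b x" "\<And>x. \<not> topple_step m e x"
  shows "b = e"
  using assms
proof (induction arbitrary: rule: converse_rtranclp_induct)
  case base
  then show ?case by (metis converse_rtranclpE)
next
  case (step c c')
  show ?case
  proof -
    obtain d where d: "(topple_step m)\<^sup>*\<^sup>* c' d" "e = d \<or> topple_step m e d"
      using strip[OF step(5) step(4) step(1)] by blast
    then have "(topple_step m)\<^sup>*\<^sup>* c' e" using step(7) by auto
    moreover have "Inv m c'" using Inv_step step(1,4) by blast
    ultimately show ?thesis using step.IH step.prems(3,4) by blast
  qed
qed

lemma stable_nf: "stable m c \<Longrightarrow> \<not> topple_step m c x"
  unfolding stable_def topple_step_def inj_on_def by force



definition occ0 :: "nat \<Rightarrow> nat \<Rightarrow> nat \<Rightarrow> int \<Rightarrow> int" where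
  "occ0 m p jj s = (if 0 \<le> s \<and> s \<le> int m \<and> s \<noteq> int jj then 1 else 0) + (if s = int (p + jj) then 1 else 0)"

definition Pst :: "nat \<Rightarrow> nat \<Rightarrow> nat \<Rightarrow> int \<Rightarrow> int \<Rightarrow> int" where
  "Pst m p jj k s = occ0 m p jj s + (if k < int (p+jj) then
     (if s = k then 1 else 0) - (if s = k+1 then 1 else 0) - (if s = int (p+jj) then 1 else 0)
      + (if s = int (p+jj) + 1 then 1 else 0) else 0)"

lemma Pst_at_k: "int jj + 1 \<le> k \<Longrightarrow> k \<le> int (p+jj) \<Longrightarrow> p + jj \<le> m \<Longrightarrow> Pst m p jj k k = 2"
  unfolding Pst_def occ0_def by auto

lemma Pst_at_jj: "int jj + 1 \<le> k \<Longrightarrow> 1 \<le> p \<Longrightarrow> Pst m p jj k (int jj) = 0"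
  unfolding Pst_def occ0_def by auto

lemma Pst_step: "int jj + 1 \<le> k \<Longrightarrow> k \<le> int (p+jj) \<Longrightarrow>
  Pst m p jj (k-1) s = Pst m p jj k s - (if s = k then 2 else 0) + (if s = k-1 then 1 else 0) + (if s = k+1 then 1 else 0)"
  unfolding Pst_def by auto

lemma Pst_end: "p + jj \<le> m \<Longrightarrow> 1 \<le> p \<Longrightarrow> Pst m p jj (int jj) s = occ0 m p (jj+1) s"
  unfolding Pst_def occ0_def by auto

lemma Pst_start: "Pst m p jj (int (p+jj)) s = occ0 m p jj s"
  unfolding Pst_def by auto

lemma occ_zero: "occ m c s = 0 \<Longrightarrow> a \<in> chips m \<Longrightarrow> c a \<noteq> s"
  unfolding occ_def by auto

lemma occ_pos: "a \<in> chips m \<Longrightarrow> occ m c (c a) \<ge> 1"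
  unfolding occ_def using card_0_eq[of "{b\<in>chips m. c b = c a}"] by fastforce

lemma occ_one: "occ m c s \<le> 1 \<Longrightarrow> a \<in> chips m \<Longrightarrow> b \<in> chips m \<Longrightarrow> c a = s \<Longrightarrow> c b = s \<Longrightarrow> a = b"
  unfolding occ_def using card_le_Suc0_iff_eq[of "{x\<in>chips m. c x = s}"] by auto

lemma fire2:
  assumes "occ m c k = 2"
  obtains \<alpha> \<beta> where "\<alpha> \<in> chips m" "\<beta> \<in> chips m" "\<alpha> < \<beta>" "c \<alpha> = k" "c \<beta> = k"
    "{a\<in>chips m. c a = k} = {\<alpha>,\<beta>}" "topple_step m c (c(\<alpha> := k-1, \<beta> := k+1))"
proof -
  obtain x y where xy: "{a\<in>chips m. c a = k} = {x,y}" "x \<noteq> y"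
    using assms unfolding occ_def card_2_iff by blast
  define \<alpha> where "\<alpha> = min x y"
  define \<beta> where "\<beta> = max x y"
  have e: "{x,y} = {\<alpha>,\<beta>}" unfolding \<alpha>_def \<beta>_def by (auto simp: min_def max_def)
  have lt: "\<alpha> < \<beta>" unfolding \<alpha>_def \<beta>_def using xy(2) by auto
  have mem: "\<alpha> \<in> chips m" "\<beta> \<in> chips m" "c \<alpha> = k" "c \<beta> = k" using xy(1) e by blast+
  have "topple_step m c (c(\<alpha> := k-1, \<beta> := k+1))"
    unfolding topple_step_def using mem lt by metis
  then show ?thesis using that mem lt xy(1) e by simp
qed

lemma wave_inner:
  assumes p1: "1 \<le> p" and pm: "p + jj \<le> m" and hdef: "h = m + 1 - p"
  shows "\<forall>c. jj+1+d \<le> p+jj \<longrightarrow> (\<forall>s. int (occ m c s) = Pst m p jj (int (jj+1+d)) s)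
     \<longrightarrow> (\<forall>a\<in>chips m. c a < int jj \<longrightarrow> a \<le> h)
     \<longrightarrow> (\<exists>a\<in>chips m. a \<le> h \<and> int jj + 1 \<le> c a \<and> c a \<le> int (jj+1+d))
     \<longrightarrow> (\<exists>c'. (topple_step m)\<^sup>*\<^sup>* c c' \<and> (\<forall>s. int (occ m c' s) = occ0 m p (jj+1) s)
            \<and> (\<forall>a\<in>chips m. c' a < int (jj+1) \<longrightarrow> a \<le> h))"
proof (induction d)
  case 0
  show ?case
  proof (intro allI impI)
    fix c
    assume kq: "jj+1+0 \<le> p+jj" and oc: "\<forall>s. int (occ m c s) = Pst m p jj (int (jj+1+0)) s"
      and A: "\<forall>a\<in>chips m. c a < int jj \<longrightarrow> a \<le> h"
      and W: "\<exists>a\<in>chips m. a \<le> h \<and> int jj + 1 \<le> c a \<and> c a \<le> int (jj+1+0)"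
    define k where "k = int jj + 1"
    have oc': "\<forall>s. int (occ m c s) = Pst m p jj k s" using oc unfolding k_def by (simp add: ac_simps)
    have "int (occ m c k) = 2" using oc' Pst_at_k[of jj k p m] kq pm k_def by simp
    then have o2: "occ m c k = 2" by simp
    obtain \<alpha> \<beta> where F: "\<alpha> \<in> chips m" "\<beta> \<in> chips m" "\<alpha> < \<beta>" "c \<alpha> = k" "c \<beta> = k"
      "{a\<in>chips m. c a = k} = {\<alpha>,\<beta>}" "topple_step m c (c(\<alpha> := k-1, \<beta> := k+1))"
      using fire2[OF o2] by blast
    define c1 where "c1 = c(\<alpha> := k-1, \<beta> := k+1)"
    have occ1: "int (occ m c1 s) = occ0 m p (jj+1) s" for s
    proof -
      have "int (occ m c1 s) = int (occ m c s) - (if s = k then 2 else 0) + (if s = k-1 then 1 else 0) + (if s = k+1 then 1 else 0)"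
        unfolding c1_def using F by (intro occ_upd) auto
      also have "\<dots> = Pst m p jj (k-1) s" using oc' Pst_step[of jj k p m s] kq k_def by simp
      also have "\<dots> = occ0 m p (jj+1) s" using Pst_end[OF pm p1] k_def by simp
      finally show ?thesis .
    qed
    obtain w where w: "w \<in> chips m" "w \<le> h" "c w = k" using W k_def by force
    have ah: "\<alpha> \<le> h" using w F(3,6) by auto
    have "int (occ m c (int jj)) = 0" using oc' Pst_at_jj[of jj k p m] p1 k_def by simp
    then have o0: "occ m c (int jj) = 0" by simp
    have A1: "\<forall>a\<in>chips m. c1 a < int (jj+1) \<longrightarrow> a \<le> h"
    proof (intro ballI impI)
      fix a assume a: "a \<in> chips m" "c1 a < int (jj+1)"
      show "a \<le> h"
      proof (cases "a = \<alpha>")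
        case True then show ?thesis using ah by simp
      next
        case False
        then have "a \<noteq> \<beta>" using a F(3) k_def unfolding c1_def by auto
        then have "c1 a = c a" using False unfolding c1_def by simp
        moreover have "c a \<noteq> int jj" using occ_zero[OF o0 a(1)] .
        ultimately have "c a < int jj" using a by simp
        then show ?thesis using A a by blast
      qed
    qed
    show "\<exists>c'. (topple_step m)\<^sup>*\<^sup>* c c' \<and> (\<forall>s. int (occ m c' s) = occ0 m p (jj+1) s)
            \<and> (\<forall>a\<in>chips m. c' a < int (jj+1) \<longrightarrow> a \<le> h)"
      using F(7) occ1 A1 unfolding c1_def by blast
  qed
next
  case (Suc d)
  show ?case
  proof (intro allI impI)
    fix c
    assume kq: "jj+1+Suc d \<le> p+jj" and oc: "\<forall>s. int (occ m c s) = Pst m p jj (int (jj+1+Suc d)) s"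
      and A: "\<forall>a\<in>chips m. c a < int jj \<longrightarrow> a \<le> h"
      and W: "\<exists>a\<in>chips m. a \<le> h \<and> int jj + 1 \<le> c a \<and> c a \<le> int (jj+1+Suc d)"
    define k where "k = int (jj+1+Suc d)"
    have km: "k - 1 = int (jj+1+d)" using k_def by simp
    have oc': "\<forall>s. int (occ m c s) = Pst m p jj k s" using oc k_def by simp
    have "int (occ m c k) = 2" using oc' Pst_at_k[of jj k p m] kq pm k_def by simp
    then have o2: "occ m c k = 2" by simp
    obtain \<alpha> \<beta> where F: "\<alpha> \<in> chips m" "\<beta> \<in> chips m" "\<alpha> < \<beta>" "c \<alpha> = k" "c \<beta> = k"
      "{a\<in>chips m. c a = k} = {\<alpha>,\<beta>}" "topple_step m c (c(\<alpha> := k-1, \<beta> := k+1))"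
      using fire2[OF o2] by blast
    define c1 where "c1 = c(\<alpha> := k-1, \<beta> := k+1)"
    have occ1: "\<forall>s. int (occ m c1 s) = Pst m p jj (int (jj+1+d)) s"
    proof
      fix s
      have "int (occ m c1 s) = int (occ m c s) - (if s = k then 2 else 0) + (if s = k-1 then 1 else 0) + (if s = k+1 then 1 else 0)"
        unfolding c1_def using F by (intro occ_upd) auto
      also have "\<dots> = Pst m p jj (k-1) s" using oc' Pst_step[of jj k p m s] kq k_def by simp
      finally show "int (occ m c1 s) = Pst m p jj (int (jj+1+d)) s" using km by simp
    qed
    obtain w where w: "w \<in> chips m" "w \<le> h" "int jj + 1 \<le> c w" "c w \<le> k" using W k_def by force
    have A1: "\<forall>a\<in>chips m. c1 a < int jj \<longrightarrow> a \<le> h"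
    proof (intro ballI impI)
      fix a assume a: "a \<in> chips m" "c1 a < int jj"
      have "a \<noteq> \<alpha>" "a \<noteq> \<beta>" using a k_def F(3) unfolding c1_def by auto
      then have "c1 a = c a" unfolding c1_def by simp
      then show "a \<le> h" using A a by auto
    qed
    have W1: "\<exists>a\<in>chips m. a \<le> h \<and> int jj + 1 \<le> c1 a \<and> c1 a \<le> int (jj+1+d)"
    proof (cases "c w = k")
      case True
      then have "\<alpha> \<le> h" using w F(3,6) by auto
      moreover have "c1 \<alpha> = k - 1" unfolding c1_def using F(3) by simp
      ultimately show ?thesis using F(1) km k_def by (intro bexI[of _ \<alpha>]) auto
    next
      case False
      then have "w \<noteq> \<alpha>" "w \<noteq> \<beta>" using F(4,5) by auto
      then have "c1 w = c w" unfolding c1_def by simp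
      then show ?thesis using w False km by (intro bexI[of _ w]) auto
    qed
    have "jj + 1 + d \<le> p + jj" using kq by simp
    then obtain c' where c': "(topple_step m)\<^sup>*\<^sup>* c1 c'" "\<forall>s. int (occ m c' s) = occ0 m p (jj+1) s"
       "\<forall>a\<in>chips m. c' a < int (jj+1) \<longrightarrow> a \<le> h"
      using Suc.IH occ1 A1 W1 by blast
    have "(topple_step m)\<^sup>*\<^sup>* c c'" using F(7) c'(1) unfolding c1_def
      by (simp add: converse_rtranclp_into_rtranclp)
    then show "\<exists>c'. (topple_step m)\<^sup>*\<^sup>* c c' \<and> (\<forall>s. int (occ m c' s) = occ0 m p (jj+1) s)
            \<and> (\<forall>a\<in>chips m. c' a < int (jj+1) \<longrightarrow> a \<le> h)" using c' by blast
  qed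
qed



lemma oc_ge1:
  assumes "\<forall>s. int (occ m c s) = f s" "a \<in> chips m"
  shows "f (c a) \<ge> 1"
proof -
  have "int (occ m c (c a)) = f (c a)" using assms(1) by (rule spec)
  moreover have "occ m c (c a) \<ge> 1" by (rule occ_pos[OF assms(2)])
  ultimately show ?thesis by linarith
qed

lemma oc_le1:
  assumes "\<forall>s. int (occ m c s) = f s" "f s \<le> 1"
  shows "occ m c s \<le> 1"
proof -
  have "int (occ m c s) = f s" using assms(1) by (rule spec)
  then show ?thesis using assms(2) by linarith
qed

lemma wave_start:
  assumes p1: "1 \<le> p" and pm: "p + jj \<le> m" and hdef: "h = m + 1 - p"
    and oc: "\<forall>s. int (occ m c s) = occ0 m p jj s"
    and A: "\<forall>a\<in>chips m. c a < int jj \<longrightarrow> a \<le> h"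
  shows "\<exists>a\<in>chips m. a \<le> h \<and> int jj + 1 \<le> c a \<and> c a \<le> int (p+jj)"
proof (rule ccontr)
  assume N: "\<not> ?thesis"
  define T where "T = {0..<int jj} \<union> {int (p+jj) + 1 .. int m}"
  have sub: "{1..h} \<subseteq> chips m" using hdef unfolding chips_def by auto
  have img: "c ` {1..h} \<subseteq> T"
  proof
    fix x assume "x \<in> c ` {1..h}"
    then obtain a where a: "a \<in> {1..h}" "x = c a" by blast
    have ac: "a \<in> chips m" using a sub by blast
    have "occ0 m p jj (c a) \<ge> 1" using oc_ge1[OF oc ac] .
    then have "(0 \<le> c a \<and> c a \<le> int m \<and> c a \<noteq> int jj) \<or> c a = int (p+jj)"
      unfolding occ0_def by (auto split: if_splits)
    moreover have "\<not> (int jj + 1 \<le> c a \<and> c a \<le> int (p+jj))" using N ac a(1) by auto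
    ultimately show "x \<in> T" unfolding T_def a(2) using p1 by auto
  qed
  have inj: "inj_on c {1..h}"
  proof (rule inj_onI)
    fix a b assume ab: "a \<in> {1..h}" "b \<in> {1..h}" "c a = c b"
    have "c a \<in> T" using img ab by blast
    then have "c a \<noteq> int (p+jj)" unfolding T_def by auto
    then have "occ0 m p jj (c a) \<le> 1" unfolding occ0_def by auto
    then have o1: "occ m c (c a) \<le> 1" using oc_le1[OF oc] by blast
    have abc: "a \<in> chips m" "b \<in> chips m" using ab(1,2) sub by auto
    show "a = b" by (rule occ_one[OF o1 abc]) (use ab(3) in simp_all)
  qed
  have fT: "finite T" unfolding T_def by simp
  have "card {1..h} \<le> card T" using card_inj_on_le[OF inj img fT] .
  moreover have "card T = jj + (m - p - jj)"
  proof -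
    have "{0..<int jj} \<inter> {int (p+jj) + 1 .. int m} = {}" by auto
    then have "card T = card {0..<int jj} + card {int (p+jj) + 1 .. int m}"
      unfolding T_def by (intro card_Un_disjoint) blast+
    moreover have "card {0..<int jj} = jj" by simp
    moreover have "card {int (p+jj) + 1 .. int m} = m - p - jj" using pm by simp
    ultimately show ?thesis by simp
  qed
  ultimately show False using hdef pm by simp
qed

lemma waves:
  assumes p1: "1 \<le> p" and pm: "p \<le> m" and hdef: "h = m + 1 - p"
    and oc: "\<forall>s. int (occ m c s) = occ0 m p 0 s"
  shows "jj \<le> h \<Longrightarrow> \<exists>c'. (topple_step m)\<^sup>*\<^sup>* c c' \<and> (\<forall>s. int (occ m c' s) = occ0 m p jj s)
          \<and> (\<forall>a\<in>chips m. c' a < int jj \<longrightarrow> a \<le> h)"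
proof (induction jj)
  case 0
  have "\<forall>a\<in>chips m. c a < 0 \<longrightarrow> a \<le> h"
  proof (intro ballI impI)
    fix a assume a: "a \<in> chips m" "c a < 0"
    have "occ0 m p 0 (c a) \<ge> 1" using oc_ge1[OF oc a(1)] .
    then show "a \<le> h" using a(2) unfolding occ0_def by (auto split: if_splits)
  qed
  then show ?case using oc by auto
next
  case (Suc jj)
  then obtain c1 where c1: "(topple_step m)\<^sup>*\<^sup>* c c1" "\<forall>s. int (occ m c1 s) = occ0 m p jj s"
    "\<forall>a\<in>chips m. c1 a < int jj \<longrightarrow> a \<le> h" by auto
  have pj: "p + jj \<le> m" using Suc.prems hdef pm by simp
  obtain w where w: "w \<in> chips m" "w \<le> h" "int jj + 1 \<le> c1 w" "c1 w \<le> int (p+jj)"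
    using wave_start[OF p1 pj hdef c1(2,3)] by blast
  have d: "jj + 1 + (p - 1) = p + jj" using p1 by simp
  have oc1: "\<forall>s. int (occ m c1 s) = Pst m p jj (int (jj+1+(p-1))) s"
    unfolding d using c1(2) Pst_start[of m p jj] by simp
  have W: "\<exists>a\<in>chips m. a \<le> h \<and> int jj + 1 \<le> c1 a \<and> c1 a \<le> int (jj+1+(p-1))"
    using w d by auto
  have le: "jj+1+(p-1) \<le> p+jj" using d by simp
  obtain c' where c': "(topple_step m)\<^sup>*\<^sup>* c1 c'" "\<forall>s. int (occ m c' s) = occ0 m p (jj+1) s"
       "\<forall>a\<in>chips m. c' a < int (jj+1) \<longrightarrow> a \<le> h"
    using mp[OF mp[OF mp[OF mp[OF spec[OF wave_inner[OF p1 pj hdef, of "p-1"], of c1] le] oc1] c1(3)] W] by blast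
  then show ?case using c1(1) by (auto intro: rtranclp_trans)
qed

lemma canonical:
  assumes p1: "1 \<le> p" and pm: "p \<le> m" and hdef: "h = m + 1 - p"
    and oc: "\<forall>s. int (occ m c s) = occ0 m p 0 s"
  shows "\<exists>c'. (topple_step m)\<^sup>*\<^sup>* c c' \<and> stable m c' \<and> {a\<in>chips m. c' a < int h} = {1..h}"
proof -
  obtain c' where c': "(topple_step m)\<^sup>*\<^sup>* c c'" "\<forall>s. int (occ m c' s) = occ0 m p h s"
    "\<forall>a\<in>chips m. c' a < int h \<longrightarrow> a \<le> h" using waves[OF p1 pm hdef oc, of h] by auto
  have le1: "occ m c' s \<le> 1" for s
  proof -
    have "occ0 m p h s \<le> 1" unfolding occ0_def using hdef pm p1 by auto
    then show ?thesis using oc_le1[OF c'(2)] by blast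
  qed
  have st: "stable m c'" unfolding stable_def
    by (rule inj_onI) (use occ_one le1 in blast)
  define X where "X = {a\<in>chips m. c' a < int h}"
  define Y where "Y = {a\<in>chips m. \<not> c' a < int h}"
  have X1: "X \<subseteq> {1..h}" using c'(3) unfolding X_def chips_def by auto
  have cX: "card X \<le> h" using card_mono[OF _ X1] by simp
  have imgY: "c' ` Y \<subseteq> {int h + 1 .. int m + 1}"
  proof
    fix x assume "x \<in> c' ` Y"
    then obtain a where a: "a \<in> Y" "x = c' a" by blast
    have ac: "a \<in> chips m" using a unfolding Y_def by blast
    have "occ0 m p h (c' a) \<ge> 1" using oc_ge1[OF c'(2) ac] .
    then have "(0 \<le> c' a \<and> c' a \<le> int m \<and> c' a \<noteq> int h) \<or> c' a = int (p+h)"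
      unfolding occ0_def by (auto split: if_splits)
    then show "x \<in> {int h + 1 .. int m + 1}" using a hdef pm p1 unfolding Y_def by auto
  qed
  have injY: "inj_on c' Y" using st unfolding stable_def Y_def by (rule inj_on_subset) auto
  have cY: "card Y \<le> p" using card_inj_on_le[OF injY imgY] hdef pm by simp
  have "X \<union> Y = chips m" "X \<inter> Y = {}" unfolding X_def Y_def by auto
  then have "card X + card Y = m + 1" using card_Un_disjoint[of X Y]
    by (metis card_chips finite_Un finite_chips)
  then have "card X = h" using cX cY hdef pm by linarith
  then have "X = {1..h}" using card_subset_eq[OF _ X1] by simp
  then show ?thesis using c'(1) st unfolding X_def by blast
qed

lemma init_occ:
  assumes "c \<in> init_configs m p" "1 \<le> p" "p \<le> m"
  shows "\<forall>s. int (occ m c s) = occ0 m p 0 s"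
proof
  fix s
  have pos: "\<forall>a\<in>chips m. 1 \<le> c a \<and> c a \<le> int m" and
    cnt: "\<forall>s\<in>{1..int m}. card {a\<in>chips m. c a = s} = (if s = int p then 2 else 1)"
    using assms(1) unfolding init_configs_def by auto
  show "int (occ m c s) = occ0 m p 0 s"
  proof (cases "s \<in> {1..int m}")
    case True
    then show ?thesis using cnt unfolding occ_def occ0_def by auto
  next
    case False
    then have "{a\<in>chips m. c a = s} = {}" using pos by force
    then show ?thesis using False assms(2,3) unfolding occ_def occ0_def by auto
  qed
qed

lemma init_Lc:
  assumes p1: "1 \<le> p" and pm: "p \<le> m" and oc: "\<forall>s. int (occ m c s) = occ0 m p 0 s"
  shows "Lc m c (-1) = 0" "Lc m c (int t) = min t m + (if p \<le> t then 1 else 0)"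
proof -
  have "{a\<in>chips m. c a \<le> -1} = {}"
  proof (rule ccontr)
    assume "{a\<in>chips m. c a \<le> -1} \<noteq> {}"
    then obtain a where a: "a \<in> chips m" "c a \<le> -1" by blast
    have "occ0 m p 0 (c a) \<ge> 1" using oc_ge1[OF oc a(1)] .
    then show False using a(2) p1 unfolding occ0_def by (auto split: if_splits)
  qed
  then show m1: "Lc m c (-1) = 0" unfolding Lc_def by simp
  show "Lc m c (int t) = min t m + (if p \<le> t then 1 else 0)"
  proof (induction t)
    case 0
    have sp: "Lc m c 0 = Lc m c (0 - 1) + occ m c 0" by (rule Lc_split)
    have "int (occ m c 0) = occ0 m p 0 0" using oc by blast
    then have "int (occ m c 0) = 0" using p1 unfolding occ0_def by simp
    with sp show ?case using m1 p1 by simp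
  next
    case (Suc t)
    have "Lc m c (int (Suc t)) = Lc m c (int (Suc t) - 1) + occ m c (int (Suc t))" by (rule Lc_split)
    then have L: "int (Lc m c (int (Suc t))) = int (Lc m c (int t)) + int (occ m c (int (Suc t)))" by simp
    have e1: "int (occ m c (int (Suc t))) = occ0 m p 0 (int (Suc t))" using oc by blast
    have e2: "occ0 m p 0 (int (Suc t)) = (if Suc t \<le> m then 1 else 0) + (if Suc t = p then 1 else 0)"
      unfolding occ0_def by simp
    have o: "int (occ m c (int (Suc t))) = (if Suc t \<le> m then 1 else 0) + (if Suc t = p then 1 else 0)"
      using e1 e2 by (rule trans)
    have "int (Lc m c (int (Suc t))) = int (min (Suc t) m + (if p \<le> Suc t then 1 else 0))"
    proof -
      have "int (Lc m c (int (Suc t))) = int (min t m) + (if p \<le> t then 1 else 0) + (if Suc t \<le> m then 1 else 0) + (if Suc t = p then 1 else 0)"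
        unfolding L o Suc.IH by simp
      then show ?thesis using p1 by (simp add: min_def split: if_split_asm)
    qed
    then show ?case by (simp only: of_nat_eq_iff)
  qed
qed

lemma init_Inv:
  assumes p1: "1 \<le> p" and pm: "p \<le> m" and oc: "\<forall>s. int (occ m c s) = occ0 m p 0 s"
  shows "Inv m c"
  unfolding Inv_def
proof (intro allI impI)
  fix s :: int assume s: "-1 \<le> s \<and> s \<le> int m + 1"
  show "s \<le> int (Lc m c s) \<and> int (Lc m c s) \<le> s + 1"
  proof (cases "s = -1")
    case True then show ?thesis using init_Lc(1)[OF p1 pm oc] by simp
  next
    case False
    define t where "t = nat s"
    have t: "s = int t" "t \<le> m + 1" using s False unfolding t_def by auto
    then show ?thesis using init_Lc(2)[OF p1 pm oc, of t] pm by auto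
  qed
qed

lemma sorted_split:
  "sorted (map f ys) \<Longrightarrow> ys = filter (\<lambda>x. f x < t) ys @ filter (\<lambda>x. \<not> f x < t) ys"
proof (induction ys)
  case Nil then show ?case by simp
next
  case (Cons y ys)
  show ?case
  proof (cases "f y < t")
    case True then show ?thesis using Cons by simp
  next
    case False
    then have "\<forall>z\<in>set ys. \<not> f z < t" using Cons.prems by auto
    then show ?thesis using False by simp
  qed
qed

lemma reading_take:
  assumes "{a\<in>chips m. c a < int h} = {1..h}"
  shows "set (take h (reading m c)) = {1..h}"
proof -
  define ys where "ys = reading m c"
  have sy: "sorted (map c ys)" unfolding ys_def reading_def by simp
  have dy: "distinct ys" unfolding ys_def reading_def by simp
  have set_ys: "set ys = chips m" unfolding ys_def reading_def chips_def by auto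
  let ?P = "\<lambda>x. c x < int h"
  have spl: "ys = filter ?P ys @ filter (\<lambda>x. \<not> ?P x) ys" using sorted_split[OF sy] .
  have "length (filter ?P ys) = card ({x. ?P x} \<inter> set ys)" using distinct_length_filter[OF dy] .
  also have "{x. ?P x} \<inter> set ys = {1..h}" using assms set_ys by auto
  finally have len: "length (filter ?P ys) = h" by simp
  have "take h ys = filter ?P ys" using spl len
    by (metis append_eq_conv_conj)
  then have "set (take h ys) = {x\<in>set ys. ?P x}" by simp
  also have "\<dots> = {1..h}" using assms set_ys by auto
  finally show ?thesis unfolding ys_def .
qed

lemma forward:
  assumes p1: "1 \<le> p" and pm: "p \<le> m" and hdef: "h = m + 1 - p"
    and c: "c \<in> init_configs m p" and tt: "topples_to m c \<pi>"
  shows "set (take h \<pi>) = {1..h}"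
proof -
  obtain c' where c': "(topple_step m)\<^sup>*\<^sup>* c c'" "stable m c'" "reading m c' = \<pi>"
    using tt unfolding topples_to_def by blast
  have oc: "\<forall>s. int (occ m c s) = occ0 m p 0 s" using init_occ[OF c p1 pm] .
  obtain d where d: "(topple_step m)\<^sup>*\<^sup>* c d" "stable m d" "{a\<in>chips m. d a < int h} = {1..h}"
    using canonical[OF p1 pm hdef oc] by blast
  have I: "Inv m c" by (rule init_Inv[OF p1 pm oc])
  have "c' = d" using NF_unique[OF c'(1) I d(1)] stable_nf c'(2) d(2) by blast
  then show ?thesis using reading_take[OF d(3)] c'(3) by simp
qed



definition cfg :: "nat list \<Rightarrow> (nat \<Rightarrow> int) \<Rightarrow> config" where
  "cfg \<pi> g x = (if x \<in> set \<pi> then g (SOME i. i < length \<pi> \<and> \<pi>!i = x) else 0)"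

definition Ef :: "nat \<Rightarrow> nat \<Rightarrow> nat \<Rightarrow> nat \<Rightarrow> int" where
  "Ef p h jj i = (if i < jj then int i else if i < h then int (p+i) else int i - int h + 1 + int jj)"

definition Wf :: "nat \<Rightarrow> nat \<Rightarrow> nat \<Rightarrow> nat \<Rightarrow> nat \<Rightarrow> int" where
  "Wf p h jj k i = (if i < jj then int i else if i = jj then int k else if i < h then int (p+i) else
     (if int i - int h + int jj + 1 \<le> int k then int i - int h + int jj + 1 else int i - int h + int jj + 2))"

lemma cfg_nth:
  assumes "distinct \<pi>" "i < length \<pi>"
  shows "cfg \<pi> g (\<pi>!i) = g i"
proof -
  have "(SOME j. j < length \<pi> \<and> \<pi>!j = \<pi>!i) = i"
  proof (rule some_equality)
    show "i < length \<pi> \<and> \<pi>!i = \<pi>!i" using assms by simp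
  next
    fix j assume "j < length \<pi> \<and> \<pi>!j = \<pi>!i"
    then show "j = i" using assms nth_eq_iff_index_eq by blast
  qed
  then show ?thesis unfolding cfg_def using assms by simp
qed

lemma cfg_cong:
  assumes "distinct \<pi>" "\<And>i. i < length \<pi> \<Longrightarrow> g i = g' i"
  shows "cfg \<pi> g = cfg \<pi> g'"
proof
  fix x
  show "cfg \<pi> g x = cfg \<pi> g' x"
  proof (cases "x \<in> set \<pi>")
    case True
    then obtain i where "i < length \<pi>" "x = \<pi>!i" by (auto simp: in_set_conv_nth)
    then show ?thesis using cfg_nth[OF assms(1)] assms(2) by simp
  next
    case False then show ?thesis unfolding cfg_def by simp
  qed
qed

lemma card_cfg:
  assumes "distinct \<pi>"
  shows "card {a\<in>set \<pi>. cfg \<pi> g a = s} = card {i. i < length \<pi> \<and> g i = s}"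
proof -
  have "{a\<in>set \<pi>. cfg \<pi> g a = s} = (\<lambda>i. \<pi>!i) ` {i. i < length \<pi> \<and> g i = s}"
  proof
    show "{a\<in>set \<pi>. cfg \<pi> g a = s} \<subseteq> (\<lambda>i. \<pi>!i) ` {i. i < length \<pi> \<and> g i = s}"
    proof
      fix a assume a: "a \<in> {a\<in>set \<pi>. cfg \<pi> g a = s}"
      then obtain i where i: "i < length \<pi>" "a = \<pi>!i" by (auto simp: in_set_conv_nth)
      then have "g i = s" using a cfg_nth[OF assms i(1)] by simp
      then show "a \<in> (\<lambda>i. \<pi>!i) ` {i. i < length \<pi> \<and> g i = s}" using i by blast
    qed
  next
    show "(\<lambda>i. \<pi>!i) ` {i. i < length \<pi> \<and> g i = s} \<subseteq> {a\<in>set \<pi>. cfg \<pi> g a = s}"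
      using cfg_nth[OF assms] by auto
  qed
  moreover have "inj_on (\<lambda>i. \<pi>!i) {i. i < length \<pi> \<and> g i = s}"
    using assms by (auto simp: inj_on_def nth_eq_iff_index_eq)
  ultimately show ?thesis by (simp add: card_image)
qed

locale bw =
  fixes n p :: nat and \<pi> :: "nat list"
  assumes n2: "n \<ge> 2" and p1: "1 \<le> p" and pn: "p \<le> n - 1"
    and dist: "distinct \<pi>" and setp: "set \<pi> = {1..n}"
    and tk: "set (take (n-p) \<pi>) = {1..n-p}"
begin

abbreviation "m \<equiv> n - 1"
abbreviation "h \<equiv> n - p"

lemma len: "length \<pi> = n"
  using distinct_card[OF dist] setp by simp

lemma chips_eq: "chips m = set \<pi>"
  unfolding chips_def setp using n2 by auto

lemma small: "i < h \<Longrightarrow> \<pi>!i \<le> h"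
proof -
  assume i: "i < h"
  have "\<pi>!i \<in> set (take h \<pi>)" using i len by (auto simp: in_set_conv_nth)
  then show ?thesis using tk by auto
qed

lemma big: "h \<le> i \<Longrightarrow> i < n \<Longrightarrow> \<pi>!i > h"
proof -
  assume i: "h \<le> i" "i < n"
  have "\<pi>!i \<in> set \<pi>" using i len by simp
  then have r: "\<pi>!i \<in> {1..n}" using setp by simp
  have "\<pi>!i \<notin> set (take h \<pi>)"
  proof
    assume "\<pi>!i \<in> set (take h \<pi>)"
    then obtain j where j: "j < length (take h \<pi>)" "take h \<pi> ! j = \<pi>!i" by (auto simp: in_set_conv_nth)
    then have "\<pi>!j = \<pi>!i" "j < h" by auto
    then show False using dist i len nth_eq_iff_index_eq by fastforce
  qed
  then show ?thesis using tk r by auto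
qed

lemma step_W:
  assumes jj: "jj < h" and k1: "jj + 1 \<le> k" and k2: "k \<le> p + jj"
  shows "topple_step m (cfg \<pi> (Wf p h jj k)) (cfg \<pi> (Wf p h jj (k-1)))"
proof -
  define ib where "ib = k - jj - 1 + h"
  have ib: "ib < n" "h \<le> ib" "jj < ib" using k1 k2 jj pn ib_def by auto
  define \<alpha> where "\<alpha> = \<pi>!jj"
  define \<beta> where "\<beta> = \<pi>!ib"
  have jn: "jj < n" using jj by simp
  have mem: "\<alpha> \<in> chips m" "\<beta> \<in> chips m" unfolding chips_eq \<alpha>_def \<beta>_def using jn ib len by auto
  have lt: "\<alpha> < \<beta>" unfolding \<alpha>_def \<beta>_def using small[OF jj] big[OF ib(2,1)] by simp
  let ?c = "cfg \<pi> (Wf p h jj k)"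
  have ca: "?c \<alpha> = int k" unfolding \<alpha>_def using cfg_nth[OF dist, of jj] jn len by (simp add: Wf_def)
  have sib: "int ib - int h + int jj + 1 = int k" using ib_def k1 ib by simp
  have cb: "?c \<beta> = int k" unfolding \<beta>_def using cfg_nth[OF dist, of ib] ib len sib
    by (simp add: Wf_def)
  have eq: "cfg \<pi> (Wf p h jj (k-1)) = ?c(\<alpha> := ?c \<alpha> - 1, \<beta> := ?c \<beta> + 1)"
  proof
    fix x
    show "cfg \<pi> (Wf p h jj (k-1)) x = (?c(\<alpha> := ?c \<alpha> - 1, \<beta> := ?c \<beta> + 1)) x"
    proof (cases "x \<in> set \<pi>")
      case False
      then have "x \<noteq> \<alpha>" "x \<noteq> \<beta>" using mem chips_eq by auto
      then show ?thesis using False unfolding cfg_def by simp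
    next
      case True
      then obtain i where i: "i < n" "x = \<pi>!i" using len by (auto simp: in_set_conv_nth)
      have xa: "x = \<alpha> \<longleftrightarrow> i = jj" unfolding \<alpha>_def i(2) using dist i(1) jn len nth_eq_iff_index_eq by metis
      have xb: "x = \<beta> \<longleftrightarrow> i = ib" unfolding \<beta>_def i(2) using dist i(1) ib(1) len nth_eq_iff_index_eq by metis
      have l: "cfg \<pi> (Wf p h jj (k-1)) x = Wf p h jj (k-1) i" using cfg_nth[OF dist] i len by simp
      have r: "?c x = Wf p h jj k i" using cfg_nth[OF dist] i len by simp
      have kk: "int (k-1) = int k - 1" using k1 by simp
      consider "i = jj" | "i = ib" | "i \<noteq> jj \<and> i \<noteq> ib" by blast
      then show ?thesis
      proof cases
        case 1
        then show ?thesis using l xa xb ca kk ib(3) unfolding Wf_def by simp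
      next
        case 2
        then have "x = \<beta>" "x \<noteq> \<alpha>" using xa xb ib(3) by auto
        then show ?thesis using l cb 2 ib sib kk unfolding Wf_def by simp
      next
        case 3
        then have "x \<noteq> \<alpha>" "x \<noteq> \<beta>" using xa xb by auto
        moreover have "Wf p h jj (k-1) i = Wf p h jj k i"
        proof -
          have "i < h \<or> int i - int h + int jj + 1 \<noteq> int k" using 3 ib_def k1 by auto
          then show ?thesis using 3 unfolding Wf_def kk by auto
        qed
        ultimately show ?thesis using l r by simp
      qed
    qed
  qed
  show ?thesis unfolding topple_step_def using mem lt ca cb eq by (metis less_irrefl)
qed

lemma chain_W:
  assumes jj: "jj < h"
  shows "d \<le> p \<Longrightarrow> (topple_step m)\<^sup>*\<^sup>* (cfg \<pi> (Wf p h jj (jj + d))) (cfg \<pi> (Wf p h jj jj))"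
proof (induction d)
  case 0 then show ?case by simp
next
  case (Suc d)
  have "topple_step m (cfg \<pi> (Wf p h jj (jj + Suc d))) (cfg \<pi> (Wf p h jj (jj + Suc d - 1)))"
    by (rule step_W) (use jj Suc.prems in auto)
  then show ?case using Suc by (simp add: converse_rtranclp_into_rtranclp)
qed

lemma W_start: "jj < h \<Longrightarrow> i < n \<Longrightarrow> Wf p h jj (p + jj) i = Ef p h jj i"
  unfolding Wf_def Ef_def using pn by auto

lemma W_end:
  assumes jj: "jj < h" shows "Wf p h jj jj i = Ef p h (jj+1) i"
proof -
  consider "i < jj" | "i = jj" | "jj < i \<and> i < h" | "h \<le> i" by linarith
  then show ?thesis
  proof cases
    case 1 then show ?thesis by (simp add: Wf_def Ef_def)
  next
    case 2 then show ?thesis using jj by (simp add: Wf_def Ef_def)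
  next
    case 3 then show ?thesis by (simp add: Wf_def Ef_def)
  next
    case 4 then show ?thesis using jj by (simp add: Wf_def Ef_def)
  qed
qed

lemma chain_E: "jj \<le> h \<Longrightarrow> (topple_step m)\<^sup>*\<^sup>* (cfg \<pi> (Ef p h 0)) (cfg \<pi> (Ef p h jj))"
proof (induction jj)
  case 0 then show ?case by simp
next
  case (Suc jj)
  then have jj: "jj < h" by simp
  have "(topple_step m)\<^sup>*\<^sup>* (cfg \<pi> (Wf p h jj (jj + p))) (cfg \<pi> (Wf p h jj jj))"
    by (rule chain_W[OF jj]) simp
  moreover have "cfg \<pi> (Wf p h jj (jj + p)) = cfg \<pi> (Ef p h jj)"
    by (rule cfg_cong[OF dist]) (use W_start[OF jj] len in \<open>simp add: add.commute\<close>)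
  moreover have "cfg \<pi> (Wf p h jj jj) = cfg \<pi> (Ef p h (Suc jj))"
    by (rule cfg_cong[OF dist]) (use W_end[OF jj] in simp)
  ultimately show ?case using Suc by (metis rtranclp_trans Suc_leD)
qed

end



context bw
begin

lemma Ef0: "Ef p h 0 i = (if i < h then int (p+i) else int i - int h + 1)"
  unfolding Ef_def by simp

lemma init_ok: "cfg \<pi> (Ef p h 0) \<in> init_configs m p"
  unfolding init_configs_def
proof (intro CollectI conjI ballI)
  fix a assume a: "a \<in> chips m"
  then obtain i where i: "i < n" "a = \<pi>!i" using chips_eq len by (auto simp: in_set_conv_nth)
  have v: "cfg \<pi> (Ef p h 0) a = Ef p h 0 i" using cfg_nth[OF dist] i len by simp
  show "1 \<le> cfg \<pi> (Ef p h 0) a" unfolding v Ef0 using p1 i by auto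
  show "cfg \<pi> (Ef p h 0) a \<le> int m" unfolding v Ef0 using p1 pn i by auto
next
  fix s assume s: "s \<in> {1..int m}"
  define t where "t = nat s"
  have t: "s = int t" "1 \<le> t" "t \<le> m" using s t_def by auto
  have cc: "card {a\<in>chips m. cfg \<pi> (Ef p h 0) a = s} = card {i. i < n \<and> Ef p h 0 i = int t}"
    unfolding chips_eq using card_cfg[OF dist] len t(1) by simp
  show "card {a\<in>chips m. cfg \<pi> (Ef p h 0) a = s} = (if s = int p then 2 else 1)"
  proof (cases "t = p")
    case True
    have "{i. i < n \<and> Ef p h 0 i = int t} = {0, n-1}"
    proof
      show "{i. i < n \<and> Ef p h 0 i = int t} \<subseteq> {0, n-1}"
      proof
        fix i assume "i \<in> {i. i < n \<and> Ef p h 0 i = int t}"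
        then have i: "i < n" "Ef p h 0 i = int p" using True by auto
        show "i \<in> {0, n-1}"
        proof (cases "i < h")
          case True then show ?thesis using i unfolding Ef0 by simp
        next
          case False then show ?thesis using i pn unfolding Ef0 by auto
        qed
      qed
    next
      show "{0, n-1} \<subseteq> {i. i < n \<and> Ef p h 0 i = int t}"
        using True pn n2 p1 unfolding Ef0 by auto
    qed
    moreover have "(0::nat) \<noteq> n - 1" using n2 by simp
    ultimately show ?thesis using cc True t(1) by simp
  next
    case False
    define j where "j = (if t < p then t + h - 1 else t - p)"
    have "{i. i < n \<and> Ef p h 0 i = int t} = {j}"
    proof
      show "{i. i < n \<and> Ef p h 0 i = int t} \<subseteq> {j}"
      proof
        fix i assume "i \<in> {i. i < n \<and> Ef p h 0 i = int t}"
        then have i: "i < n" "Ef p h 0 i = int t" by auto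
        show "i \<in> {j}"
        proof (cases "i < h")
          case True then show ?thesis using i t pn False unfolding Ef0 j_def by auto
        next
          case nh: False then show ?thesis using i t pn False unfolding Ef0 j_def by auto
        qed
      qed
    next
      show "{j} \<subseteq> {i. i < n \<and> Ef p h 0 i = int t}"
        using t pn False p1 unfolding Ef0 j_def by auto
    qed
    then show ?thesis using cc False t(1) by simp
  qed
qed

lemma Eh: "Ef p h h i = (if i < h then int i else int i + 1)"
  unfolding Ef_def by simp

lemma Eh_mono: "i \<le> j \<Longrightarrow> Ef p h h i \<le> Ef p h h j"
  unfolding Eh by auto

lemma Eh_inj: "Ef p h h i = Ef p h h j \<Longrightarrow> i = j"
  unfolding Eh by (auto split: if_splits)

lemma inj_final: "inj_on (cfg \<pi> (Ef p h h)) (set \<pi>)"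
proof (rule inj_onI)
  fix x y assume xy: "x \<in> set \<pi>" "y \<in> set \<pi>" "cfg \<pi> (Ef p h h) x = cfg \<pi> (Ef p h h) y"
  obtain i where i: "i < length \<pi>" "x = \<pi>!i" using xy(1) by (auto simp: in_set_conv_nth)
  obtain j where j: "j < length \<pi>" "y = \<pi>!j" using xy(2) by (auto simp: in_set_conv_nth)
  have "Ef p h h i = Ef p h h j" using xy(3) cfg_nth[OF dist] i j by simp
  then have "i = j" by (rule Eh_inj)
  then show "x = y" using i j by simp
qed

lemma final_stable: "stable m (cfg \<pi> (Ef p h h))"
  unfolding stable_def chips_eq by (rule inj_final)

lemma final_reading: "reading m (cfg \<pi> (Ef p h h)) = \<pi>"
proof -
  let ?f = "cfg \<pi> (Ef p h h)"
  let ?xs = "sort_key ?f [1..<m+2]"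
  have "set [1..<m+2] = {1..n}" using n2 by auto
  then have sx: "set ?xs = set \<pi>" using setp by (simp only: set_sort)
  have inj: "inj_on ?f (set ?xs \<union> set \<pi>)" using sx inj_final by (simp only: Un_absorb)
  have s1: "sorted (map ?f ?xs)" by (rule sorted_sort_key)
  have dx: "distinct ?xs" by (simp only: distinct_sort distinct_upt)
  have d1: "distinct (map ?f ?xs)" unfolding distinct_map using dx sx inj_final by (simp only: simp_thms)
  have s2: "sorted (map ?f \<pi>)"
    unfolding sorted_iff_nth_mono
  proof (intro allI impI)
    fix i j assume ij: "i \<le> j" "j < length (map ?f \<pi>)"
    then have "i < length \<pi>" "j < length \<pi>" by auto
    then show "map ?f \<pi> ! i \<le> map ?f \<pi> ! j"
      using cfg_nth[OF dist] Eh_mono[OF ij(1)] by (simp only: nth_map)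
  qed
  have d2: "distinct (map ?f \<pi>)" unfolding distinct_map using dist inj_final by (simp only: simp_thms)
  have "?xs = \<pi>" by (rule map_sorted_distinct_set_unique[OF inj s1 d1 s2 d2 sx])
  then show ?thesis unfolding reading_def .
qed

lemma backward: "p_resultant n p \<pi>"
proof -
  have "topples_to m (cfg \<pi> (Ef p h 0)) \<pi>"
    unfolding topples_to_def
    by (rule exI[of _ "cfg \<pi> (Ef p h h)"]) (use chain_E[of h] final_stable final_reading in simp)
  then show ?thesis unfolding p_resultant_def using init_ok by blast
qed

end


theorem theorem2p10:
  fixes n p :: nat and \<pi> :: "nat list"
  assumes "n \<ge> 2" and "1 \<le> p" and "p \<le> n - 1" and "is_perm n \<pi>"
  shows "p_resultant n p \<pi> \<longleftrightarrow> set (take (n - p) \<pi>) = {1..n - p}"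
proof
  assume "p_resultant n p \<pi>"
  then obtain c where c: "c \<in> init_configs (n-1) p" "topples_to (n-1) c \<pi>"
    unfolding p_resultant_def by blast
  have h: "n - p = n - 1 + 1 - p" using assms(1) by simp
  show "set (take (n - p) \<pi>) = {1..n - p}"
    by (rule forward[OF assms(2) assms(3) h c(1) c(2)])
next
  assume t: "set (take (n - p) \<pi>) = {1..n - p}"
  interpret bw n p \<pi>
    by unfold_locales (use assms t in \<open>auto simp: is_perm_def\<close>)
  show "p_resultant n p \<pi>" by (rule backward)
qed

end
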